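(* Let $n\ge1$ and let $\Sigma=\begin{bmatrix}\Sigma_{11}&\Sigma_{12}\\\Sigma_{12}&\Sigma_{22}\end{bmatrix}$ be a positive definite $2\times2$ matrix with $cn\le\lambda_{\min}(\Sigma)\le\lambda_{\max}(\Sigma)\le Cn$ for constants $0<c\le C$. Let $Z\sim N(\mu,\Sigma)$ with $\mu=(\mu_1,\mu_2)$, let $r\ge1$ and $t=r\sqrt n$. Then $$\mathbb P\big(Z\in(-\infty,\mu_1-t]\times(-\infty,\mu_2-t]\big)\ge\alpha_r(c,C):=\big(\Phi(a)-\Phi(2a)\big)\,\Phi\!\Big(\frac{a(1+2\rho_0)}{\sqrt{1-\rho_0^2}}\Big),$$ where $a=-r/\sqrt c$ and $\rho_0=\sqrt{1-(c/C)^2}$.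
   Context: $\Phi(t)=\frac1{\sqrt{2\pi}}\int_{-\infty}^te^{-x^2/2}dx$ is the standard normal distribution function; $\lambda_{\min},\lambda_{\max}$ are the smallest and largest eigenvalues; $N(\mu,\Sigma)$ is the bivariate Gaussian with mean $\mu$ and covariance $\Sigma$. *)

theory Defs
  imports "HOL-Probability.Probability"
begin

definition Phi :: "real \<Rightarrow> real" where
  "Phi t = measure (density lborel (\<lambda>x. ennreal (std_normal_density x))) {..t}"

definition eigenvalues2 :: "real \<Rightarrow> real \<Rightarrow> real \<Rightarrow> real set" where
  "eigenvalues2 s11 s12 s22 =
     {l. \<exists>x y. (x, y) \<noteq> (0, 0) \<and> s11 * x + s12 * y = l * x \<and> s12 * x + s22 * y = l * y}"

definition lambda_min2 :: "real \<Rightarrow> real \<Rightarrow> real \<Rightarrow> real" where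
  "lambda_min2 s11 s12 s22 = Inf (eigenvalues2 s11 s12 s22)"

definition lambda_max2 :: "real \<Rightarrow> real \<Rightarrow> real \<Rightarrow> real" where
  "lambda_max2 s11 s12 s22 = Sup (eigenvalues2 s11 s12 s22)"

definition pos_def2 :: "real \<Rightarrow> real \<Rightarrow> real \<Rightarrow> bool" where
  "pos_def2 s11 s12 s22 \<longleftrightarrow>
     (\<forall>x y. (x, y) \<noteq> (0, 0) \<longrightarrow> s11 * x\<^sup>2 + 2 * s12 * x * y + s22 * y\<^sup>2 > 0)"

definition bivariate_normal_density ::
  "real \<Rightarrow> real \<Rightarrow> real \<Rightarrow> real \<Rightarrow> real \<Rightarrow> real \<times> real \<Rightarrow> real" where
  "bivariate_normal_density m1 m2 s11 s12 s22 z =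
     (let d = s11 * s22 - s12\<^sup>2; u = fst z - m1; v = snd z - m2 in
      exp (- (s22 * u\<^sup>2 - 2 * s12 * u * v + s11 * v\<^sup>2) / (2 * d)) / (2 * pi * sqrt d))"

definition bivariate_normal ::
  "real \<Rightarrow> real \<Rightarrow> real \<Rightarrow> real \<Rightarrow> real \<Rightarrow> (real \<times> real) measure" where
  "bivariate_normal m1 m2 s11 s12 s22 =
     density lborel (\<lambda>z. ennreal (bivariate_normal_density m1 m2 s11 s12 s22 z))"

definition alpha_r :: "real \<Rightarrow> real \<Rightarrow> real \<Rightarrow> real" where
  "alpha_r r c C =
     (let a = - r / sqrt c; \<rho>0 = sqrt (1 - (c / C)\<^sup>2) in
      (Phi a - Phi (2 * a)) * Phi (a * (1 + 2 * \<rho>0) / sqrt (1 - \<rho>0\<^sup>2)))"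

end

theory Submission
  imports Defs
begin

lemma factor:
  fixes s11 s12 s22 m1 m2 x y :: real
  assumes s11: "s11 > 0" and d: "s11 * s22 - s12\<^sup>2 > 0"
  shows "bivariate_normal_density m1 m2 s11 s12 s22 (x,y) =
    normal_density m1 (sqrt s11) x * normal_density (m2 + s12/s11*(x-m1)) (sqrt((s11 * s22 - s12\<^sup>2)/s11)) y"
proof -
  define d where "d = s11 * s22 - s12\<^sup>2"
  define u where "u = x - m1"
  define v where "v = y - m2"
  have dp: "d > 0" using d d_def by simp
  have e: "- (s22 * u\<^sup>2 - 2 * s12 * u * v + s11 * v\<^sup>2) / (2 * d) =
     -(u)\<^sup>2 / (2 * (sqrt s11)\<^sup>2) + -(v - s12/s11*u)\<^sup>2 / (2 * (sqrt(d/s11))\<^sup>2)"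
    using s11 dp unfolding d_def by (simp add: field_simps power2_eq_square)
  have r: "sqrt (2 * pi * (sqrt s11)\<^sup>2) * sqrt (2 * pi * (sqrt (d/s11))\<^sup>2) = 2 * pi * sqrt d"
  proof -
    have "sqrt (2 * pi * (sqrt s11)\<^sup>2) * sqrt (2 * pi * (sqrt (d/s11))\<^sup>2) = sqrt ((2 * pi *  s11) * (2 * pi * (d/s11)))"
    proof -
      have h1: "(sqrt s11)\<^sup>2 = s11" using s11 by simp
      have h2: "(sqrt (d/s11))\<^sup>2 = d/s11" using s11 dp by simp
      show ?thesis unfolding h1 h2 by (rule real_sqrt_mult[symmetric])
    qed
    also have "(2 * pi *  s11) * (2 * pi * (d/s11)) = (2*pi)\<^sup>2 * d" using s11 by (simp add: field_simps power2_eq_square)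
    also have "sqrt ((2*pi)\<^sup>2 * d) = 2*pi* sqrt d" by (simp add: real_sqrt_mult)
    finally show ?thesis .
  qed
  show ?thesis
    unfolding bivariate_normal_density_def normal_density_def Let_def
    using e r s11 dp unfolding d_def[symmetric] u_def v_def
    by (simp add: exp_add[symmetric] field_simps)
qed

lemma nd_affine:
  fixes \<sigma> \<mu> x :: real assumes "\<sigma> > 0"
  shows "normal_density \<mu> \<sigma> (\<mu> + \<sigma> * x) = std_normal_density x / \<sigma>"
proof -
  have "sqrt (2 * pi * \<sigma>\<^sup>2) = sqrt (2 * pi) * \<sigma>" using assms by (simp add: real_sqrt_mult)
  thus ?thesis using assms unfolding normal_density_def by (simp add: power_mult_distrib field_simps)
qed

lemma aff:
  fixes \<sigma> \<mu> :: real and S :: "real set"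
  assumes s: "\<sigma> > 0" and S[measurable]: "S \<in> sets borel"
  shows "(\<integral>\<^sup>+y. ennreal (normal_density \<mu> \<sigma> y) * indicator S ((y - \<mu>) / \<sigma>) \<partial>lborel)
       = emeasure (density lborel std_normal_density) S"
proof -
  have "(\<integral>\<^sup>+y. ennreal (normal_density \<mu> \<sigma> y) * indicator S ((y - \<mu>) / \<sigma>) \<partial>lborel)
     = ennreal \<bar>\<sigma>\<bar> * (\<integral>\<^sup>+x. ennreal (normal_density \<mu> \<sigma> (\<mu> + \<sigma> * x)) * indicator S ((\<mu> + \<sigma> * x - \<mu>) / \<sigma>) \<partial>lborel)"
    using s by (intro nn_integral_real_affine) (auto simp: normal_density_def)
  also have "\<dots> = ennreal \<sigma> * (\<integral>\<^sup>+x. ennreal (std_normal_density x / \<sigma>) * indicator S x \<partial>lborel)"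
    using s by (simp add: nd_affine)
  also have "\<dots> = (\<integral>\<^sup>+x. ennreal \<sigma> * (ennreal (std_normal_density x / \<sigma>) * indicator S x) \<partial>lborel)"
    by (rule nn_integral_cmult[symmetric]) (auto simp: normal_density_def)
  also have "\<dots> = (\<integral>\<^sup>+x. ennreal (std_normal_density x) * indicator S x \<partial>lborel)"
  proof (rule nn_integral_cong)
    fix x
    have "ennreal \<sigma> * ennreal (std_normal_density x / \<sigma>) = ennreal (std_normal_density x)"
      using s by (simp add: ennreal_mult[symmetric] normal_density_nonneg)
    thus "ennreal \<sigma> * (ennreal (std_normal_density x / \<sigma>) * indicator S x) = ennreal (std_normal_density x) * indicator S x"
      by (simp add: mult.assoc[symmetric])
  qed
  also have "\<dots> = emeasure (density lborel std_normal_density) S"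
    by (rule emeasure_density[symmetric]) (auto simp: normal_density_def)
  finally show ?thesis .
qed

lemma Phi_emeasure: "ennreal (Phi t) = emeasure (density lborel std_normal_density) {..t}"
proof -
  interpret P: prob_space "density lborel std_normal_density" using prob_space_normal_density[of 1 0] by simp
  show ?thesis unfolding Phi_def by (simp add: P.emeasure_eq_measure)
qed

lemma Phi_mono: "s \<le> t \<Longrightarrow> Phi s \<le> Phi t"
proof -
  assume st: "s \<le> t"
  interpret P: prob_space "density lborel std_normal_density" using prob_space_normal_density[of 1 0] by simp
  show ?thesis unfolding Phi_def using st by (intro P.finite_measure_mono) auto
qed

lemma Phi_nonneg: "0 \<le> Phi t"
  unfolding Phi_def by simp

lemma Phi_diff: "s \<le> t \<Longrightarrow> emeasure (density lborel std_normal_density) {s<..t} = ennreal (Phi t - Phi s)"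
proof -
  assume st: "s \<le> t"
  interpret P: prob_space "density lborel std_normal_density" using prob_space_normal_density[of 1 0] by simp
  have e: "{s<..t} = {..t} - {..s}" by auto
  have "measure (density lborel std_normal_density) ({..t} - {..s}) = Phi t - Phi s"
    unfolding Phi_def using st by (subst P.finite_measure_Diff) auto
  thus ?thesis using P.emeasure_eq_measure e by simp
qed


lemma eig_char:
  assumes "l \<in> eigenvalues2 s11 s12 s22"
  shows "(l - s11) * (l - s22) = s12\<^sup>2"
proof -
  from assms obtain x y where nz: "(x, y) \<noteq> (0, 0)" and e1: "s11 * x + s12 * y = l * x"
    and e2: "s12 * x + s22 * y = l * y" unfolding eigenvalues2_def by auto
  have "((l - s11) * (l - s22) - s12\<^sup>2) * x = 0"
  proof -
    have "((l - s11) * (l - s22) - s12\<^sup>2) * x = (l - s22) * ((l - s11) * x - s12 * y) - s12 * (s12 * x - (l - s22) * y)"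
      by (simp add: algebra_simps power2_eq_square)
    also have "\<dots> = 0" using e1 e2 by (simp add: algebra_simps)
    finally show ?thesis .
  qed
  moreover have "((l - s11) * (l - s22) - s12\<^sup>2) * y = 0"
  proof -
    have "((l - s11) * (l - s22) - s12\<^sup>2) * y = (l - s11) * ((l - s22) * y - s12 * x) - s12 * (s12 * y - (l - s11) * x)"
      by (simp add: algebra_simps power2_eq_square)
    also have "\<dots> = 0" using e1 e2 by (simp add: algebra_simps)
    finally show ?thesis .
  qed
  ultimately show ?thesis using nz by auto
qed

lemma eig_mem:
  assumes "(l - s11) * (l - s22) = s12\<^sup>2"
  shows "l \<in> eigenvalues2 s11 s12 s22"
proof (cases "(s12, l - s11) = (0, 0)")
  case True
  then show ?thesis unfolding eigenvalues2_def by (intro CollectI exI[of _ 1] exI[of _ 0]) auto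
next
  case False
  have "s12 * s12 + s22 * (l - s11) = l * (l - s11)"
    using assms by (simp add: algebra_simps power2_eq_square)
  then show ?thesis using False unfolding eigenvalues2_def
    by (intro CollectI exI[of _ s12] exI[of _ "l - s11"]) (auto simp: algebra_simps)
qed

lemma eig_facts:
  fixes s11 s12 s22 c C N :: real
  assumes "0 < c" "c \<le> C" "0 < N"
    and lmin: "c * N \<le> lambda_min2 s11 s12 s22"
    and lmax: "lambda_max2 s11 s12 s22 \<le> C * N"
  shows "c * N \<le> s11" "c * N * s11 \<le> s11 * s22 - s12\<^sup>2"
    "c * s11 * s22 \<le> C * (s11 * s22 - s12\<^sup>2)"
proof -
  define h where "h = (s11 - s22) / 2"
  define T where "T = (s11 + s22) / 2"
  define D where "D = sqrt (h\<^sup>2 + s12\<^sup>2)"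
  have D0: "D \<ge> 0" unfolding D_def by simp
  have DD: "D\<^sup>2 = h\<^sup>2 + s12\<^sup>2" unfolding D_def by simp
  have hD: "\<bar>h\<bar> \<le> D" unfolding D_def by (rule real_sqrt_ge_abs1)
  have ch: "(l - s11) * (l - s22) = s12\<^sup>2 \<longleftrightarrow> (l - T)\<^sup>2 = D\<^sup>2" for l
    unfolding DD h_def T_def by (simp add: algebra_simps power2_eq_square field_simps) (auto simp: algebra_simps)
  have mem: "T - D \<in> eigenvalues2 s11 s12 s22" "T + D \<in> eigenvalues2 s11 s12 s22"
    by (rule eig_mem, subst ch, simp)+
  have bnd: "T - D \<le> l \<and> l \<le> T + D" if "l \<in> eigenvalues2 s11 s12 s22" for l
  proof -
    have "(l - T)\<^sup>2 = D\<^sup>2" using ch eig_char[OF that] by simp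
    hence "\<bar>l - T\<bar> = D" using D0 by (metis abs_of_nonneg power2_abs power2_eq_iff_nonneg abs_ge_zero)
    thus ?thesis by auto
  qed
  have mn: "lambda_min2 s11 s12 s22 = T - D"
    unfolding lambda_min2_def by (rule cInf_eq_minimum[OF mem(1)]) (use bnd in auto)
  have mx: "lambda_max2 s11 s12 s22 = T + D"
    unfolding lambda_max2_def by (rule cSup_eq_maximum[OF mem(2)]) (use bnd in auto)
  have L: "c * N \<le> T - D" and U: "T + D \<le> C * N" using lmin lmax mn mx by auto
  have hD2: "h \<le> D" "-h \<le> D" using hD by (auto simp: abs_le_iff)
  have s11l: "T - D \<le> s11" "s11 \<le> T + D" "s22 \<le> T + D" "T - D \<le> s22"
    using hD2 unfolding h_def T_def by (simp_all add: field_simps)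
  have det: "s11 * s22 - s12\<^sup>2 = (T - D) * (T + D)"
    using DD unfolding h_def T_def by (simp add: algebra_simps power2_eq_square field_simps)
  have cN: "c * N > 0" using assms by simp
  show "c * N \<le> s11" using L s11l by linarith
  show "c * N * s11 \<le> s11 * s22 - s12\<^sup>2" unfolding det
    using L s11l cN by (intro mult_mono) auto
  have s22p: "s22 \<ge> 0" using s11l(4) L cN by linarith
  have "s11 * s22 \<le> (T + D) * (T + D)"
    using s11l s22p cN L by (intro mult_mono) auto
  hence "c * (s11 * s22) \<le> c * ((T + D) * (T + D))" using assms by (intro mult_left_mono) auto
  hence "c * s11 * s22 \<le> c * ((T + D) * (T + D))" by (simp add: mult.assoc)
  also have "\<dots> = (c * (T + D)) * (T + D)" by simp
  also have "\<dots> \<le> (C * (T - D)) * (T + D)"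
  proof (intro mult_right_mono)
    have "c * (T + D) \<le> c * (C * N)" using U assms by (intro mult_left_mono) auto
    also have "\<dots> = C * (c * N)" by simp
    also have "\<dots> \<le> C * (T - D)" using L assms by (intro mult_left_mono) auto
    finally show "c * (T + D) \<le> C * (T - D)" .
    show "0 \<le> T + D" using L cN D0 by linarith
  qed
  finally show "c * s11 * s22 \<le> C * (s11 * s22 - s12\<^sup>2)" unfolding det by (simp add: algebra_simps)
qed

lemma core:
  fixes c C N r t s11 s12 s22 m1 m2 x :: real
  assumes c: "0 < c" "c \<le> C" and N: "0 < N" and r: "1 \<le> r" and t: "t = r * sqrt N"
    and s11: "0 < s11" and d: "0 < s11 * s22 - s12\<^sup>2"
    and B1: "c * N * s11 \<le> s11 * s22 - s12\<^sup>2" and B2: "c * s11 * s22 \<le> C * (s11 * s22 - s12\<^sup>2)"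
    and x1: "2 * (- r / sqrt c) < (x - m1) / sqrt s11" "(x - m1) / sqrt s11 \<le> - r / sqrt c"
  shows "(- r / sqrt c) * (1 + 2 * sqrt (1 - (c / C)\<^sup>2)) / sqrt (1 - (sqrt (1 - (c / C)\<^sup>2))\<^sup>2)
     \<le> ((m2 - t) - (m2 + s12 / s11 * (x - m1))) / sqrt ((s11 * s22 - s12\<^sup>2) / s11)"
proof -
  define d where "d = s11 * s22 - s12\<^sup>2"
  define \<sigma> where "\<sigma> = sqrt s11"
  define sd where "sd = sqrt d"
  define k where "k = c / C"
  define \<rho> where "\<rho> = sqrt (1 - k\<^sup>2)"
  define y where "y = (x - m1) / \<sigma>"
  have dp: "d > 0" using d d_def by simp
  have \<sigma>p: "\<sigma> > 0" using s11 \<sigma>_def by simp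
  have sdp: "sd > 0" using dp sd_def by simp
  have Cp: "C > 0" using c by simp
  have k0: "0 < k" "k \<le> 1" using c Cp k_def by auto
  have k2: "k\<^sup>2 \<le> 1" using k0 power_le_one[of k 2] by simp
  have \<rho>0: "\<rho> \<ge> 0" unfolding \<rho>_def using k2 by simp
  have sk: "sqrt (1 - \<rho>\<^sup>2) = k" unfolding \<rho>_def using k2 k0 by simp
  have sc: "sqrt c > 0" using c by simp
  have xm: "x - m1 = \<sigma> * y" unfolding y_def using \<sigma>p by simp
  have \<sigma>2: "\<sigma> * \<sigma> = s11" unfolding \<sigma>_def using s11 by simp
  have arg: "((m2 - t) - (m2 + s12 / s11 * (x - m1))) / sqrt ((s11 * s22 - s12\<^sup>2) / s11)
       = - (t * \<sigma> / sd) - (s12 / sd) * y"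
  proof -
    have "sqrt ((s11 * s22 - s12\<^sup>2) / s11) = sd / \<sigma>"
      unfolding sd_def \<sigma>_def d_def by (simp add: real_sqrt_divide)
    moreover have "s12 / s11 * (\<sigma> * y) = s12 * y / \<sigma>" unfolding \<sigma>2[symmetric] using \<sigma>p by (simp add: field_simps)
    moreover have "(- t - s12 * y / \<sigma>) / (sd / \<sigma>) = - (t * \<sigma> / sd) - (s12 / sd) * y"
      using \<sigma>p sdp by (simp add: field_simps)
    ultimately show ?thesis unfolding xm by simp
  qed
  have A: "t * \<sigma> / sd \<le> r / (sqrt c * k)"
  proof -
    have "t * \<sigma> * sqrt c = sqrt (r\<^sup>2 * (N * s11 * c))"
      unfolding t \<sigma>_def using r N s11 c by (simp add: real_sqrt_mult)
    also have "\<dots> \<le> sqrt (r\<^sup>2 * d)"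
      using B1 unfolding d_def by (intro real_sqrt_le_mono mult_left_mono) (auto simp: algebra_simps)
    also have "\<dots> = r * sd" unfolding sd_def using r by (simp add: real_sqrt_mult)
    finally have "t * \<sigma> * sqrt c \<le> r * sd" .
    hence "t * \<sigma> / sd \<le> r / sqrt c" using sdp sc by (simp add: field_simps)
    also have "\<dots> \<le> r / sqrt c / k" using k0 r sc by (simp add: field_simps)
    finally show ?thesis by (simp add: field_simps)
  qed
  have B: "\<bar>s12\<bar> / sd \<le> \<rho> / k"
  proof -
    have ss: "s11 * s22 \<ge> 0" using dp unfolding d_def by (smt (verit) zero_le_power2)
    have "k * (s11 * s22) \<le> d" using B2 Cp unfolding k_def d_def by (simp add: field_simps)
    moreover have "k\<^sup>2 * (s11 * s22) \<le> k * (s11 * s22)"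
      using k0 ss by (intro mult_right_mono) (auto simp: power2_eq_square)
    ultimately have "k\<^sup>2 * (s11 * s22) \<le> d" by linarith
    hence "s12\<^sup>2 * k\<^sup>2 \<le> (1 - k\<^sup>2) * d" unfolding d_def by (simp add: algebra_simps)
    hence "sqrt (s12\<^sup>2 * k\<^sup>2) \<le> sqrt ((1 - k\<^sup>2) * d)" by (rule real_sqrt_le_mono)
    hence "\<bar>s12\<bar> * k \<le> \<rho> * sd" unfolding \<rho>_def sd_def using k0 by (simp add: real_sqrt_mult)
    thus ?thesis using k0 sdp by (simp add: field_simps)
  qed
  have Y: "\<bar>y\<bar> \<le> 2 * (r / sqrt c)"
  proof -
    have y1: "2 * (- r / sqrt c) < y" "y \<le> - r / sqrt c" using x1 unfolding y_def \<sigma>_def by auto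
    have "r / sqrt c > 0" using r sc by simp
    thus ?thesis using y1 by (auto simp: abs_le_iff)
  qed
  have "- (s12 / sd) * y \<ge> - (\<bar>s12\<bar> / sd * \<bar>y\<bar>)"
  proof -
    have "s12 * y \<le> \<bar>s12\<bar> * \<bar>y\<bar>" by (metis abs_ge_self abs_mult)
    hence "s12 * y / sd \<le> \<bar>s12\<bar> * \<bar>y\<bar> / sd" using sdp by (simp add: divide_right_mono)
    thus ?thesis by simp
  qed
  moreover have "\<bar>s12\<bar> / sd * \<bar>y\<bar> \<le> \<rho> / k * (2 * (r / sqrt c))"
    using B Y k0 \<rho>0 by (intro mult_mono) auto
  ultimately have "- (t * \<sigma> / sd) - (s12 / sd) * y \<ge> - (r / (sqrt c * k)) - \<rho> / k * (2 * (r / sqrt c))"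
    using A by linarith
  moreover have "- (r / (sqrt c * k)) - \<rho> / k * (2 * (r / sqrt c)) = (- r / sqrt c) * (1 + 2 * \<rho>) / k"
    using k0 sc by (simp add: field_simps)
  ultimately show ?thesis unfolding arg using sk unfolding \<rho>_def k_def by simp
qed
lemma nd_meas[measurable]:
  assumes [measurable]: "f \<in> borel_measurable M" "g \<in> borel_measurable M" "h \<in> borel_measurable M"
  shows "(\<lambda>x. normal_density (f x) (g x) (h x)) \<in> borel_measurable M"
  unfolding normal_density_def by measurable

lemma ind_le_meas[measurable]:
  fixes f h :: "'a \<Rightarrow> real"
  assumes [measurable]: "f \<in> borel_measurable M" "h \<in> borel_measurable M"
  shows "(\<lambda>z. indicator {..f z} (h z) :: ennreal) \<in> borel_measurable M"
proof -
  have "(\<lambda>z. indicator {..f z} (h z) :: ennreal) = (\<lambda>z. if h z \<le> f z then 1 else 0)"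
    by (auto simp: indicator_def fun_eq_iff)
  also have "\<dots> \<in> borel_measurable M" by measurable
  finally show ?thesis .
qed
theorem lemma2p10:
  fixes n :: nat and s11 s12 s22 m1 m2 c C r t :: real
    and M :: "'a measure" and Z :: "'a \<Rightarrow> real \<times> real"
  assumes "n \<ge> 1"
    and "0 < c" and "c \<le> C"
    and "pos_def2 s11 s12 s22"
    and "c * real n \<le> lambda_min2 s11 s12 s22"
    and "lambda_min2 s11 s12 s22 \<le> lambda_max2 s11 s12 s22"
    and "lambda_max2 s11 s12 s22 \<le> C * real n"
    and "prob_space M"
    and "Z \<in> measurable M lborel"
    and "distr M lborel Z = bivariate_normal m1 m2 s11 s12 s22"
    and "r \<ge> 1" and "t = r * sqrt (real n)"
  shows "prob_space.prob M {\<omega> \<in> space M. Z \<omega> \<in> {..m1 - t} \<times> {..m2 - t}} \<ge> alpha_r r c C"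
proof -
  note A = assms
  interpret M: prob_space M by (rule A(8))
  define B where "B = bivariate_normal m1 m2 s11 s12 s22"
  define f where "f = bivariate_normal_density m1 m2 s11 s12 s22"
  define d where "d = s11 * s22 - s12\<^sup>2"
  define \<sigma> where "\<sigma> = sqrt s11"
  define \<tau> where "\<tau> = sqrt (d / s11)"
  define a where "a = - r / sqrt c"
  define \<rho>0 where "\<rho>0 = sqrt (1 - (c / C)\<^sup>2)"
  define K where "K = Phi (a * (1 + 2 * \<rho>0) / sqrt (1 - \<rho>0\<^sup>2))"
  define \<mu> where "\<mu> = (\<lambda>x. m2 + s12 / s11 * (x - m1))"
  define Q where "Q = {..m1 - t} \<times> {..m2 - t}"
  define J where "J = {2 * a<..a}"
  define Dn where "Dn = density lborel std_normal_density"
  have Np: "real n > 0" using A(1) by simp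
  have E1: "c * real n \<le> s11" and E2: "c * real n * s11 \<le> d" and E3: "c * s11 * s22 \<le> C * d"
    using eig_facts[OF A(2) A(3) Np A(5) A(7)] unfolding d_def by auto
  have cn: "c * real n > 0" using A(2) Np by simp
  have s11p: "s11 > 0" using E1 cn by linarith
  have dp: "d > 0" using E2 cn s11p by (smt (verit) mult_pos_pos)
  have \<sigma>p: "\<sigma> > 0" unfolding \<sigma>_def using s11p by simp
  have \<tau>p: "\<tau> > 0" unfolding \<tau>_def using s11p dp by simp
  have sc: "sqrt c > 0" using A(2) by simp
  have ap: "a < 0" unfolding a_def using A(11) sc by simp
  have fact: "f (x, y) = normal_density m1 \<sigma> x * normal_density (\<mu> x) \<tau> y" for x y
    unfolding f_def \<sigma>_def \<tau>_def \<mu>_def d_def using factor[OF s11p] dp d_def by simp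
  have Qs[measurable]: "Q \<in> sets (borel :: (real \<times> real) measure)"
    unfolding Q_def by (rule borel_closed) (simp add: closed_Times)
  have fm[measurable]: "f \<in> borel_measurable borel"
    unfolding borel_prod[symmetric] f_def bivariate_normal_density_def Let_def by measurable
  have prob_eq: "M.prob {\<omega> \<in> space M. Z \<omega> \<in> Q} = measure B Q"
    unfolding B_def A(10)[symmetric] using A(9) Qs
    by (subst measure_distr) (auto intro!: arg_cong[where f="measure M"])
  have em_eq: "emeasure B Q = ennreal (measure B Q)"
  proof -
    have "emeasure B Q = emeasure M (Z -` Q \<inter> space M)"
      unfolding B_def A(10)[symmetric] using A(9) Qs by (subst emeasure_distr) auto
    also have "\<dots> = ennreal (measure M (Z -` Q \<inter> space M))" by (rule M.emeasure_eq_measure)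
    also have "measure M (Z -` Q \<inter> space M) = measure B Q"
      unfolding B_def A(10)[symmetric] using A(9) Qs by (subst measure_distr) auto
    finally show ?thesis .
  qed
  define g where "g = (\<lambda>x y. ennreal (normal_density m1 \<sigma> x) * indicator J ((x - m1) / \<sigma>) *
      (ennreal (normal_density (\<mu> x) \<tau> y) * indicator {..(m2 - t - \<mu> x) / \<tau>} ((y - \<mu> x) / \<tau>)))"
  have gm[measurable]: "(\<lambda>z. g (fst z) (snd z)) \<in> borel_measurable (lborel \<Otimes>\<^sub>M lborel)"
    unfolding g_def \<mu>_def J_def by measurable
  have tle: "\<sigma> * a \<le> - t"
  proof -
    have "sqrt (c * real n) \<le> \<sigma>" unfolding \<sigma>_def using E1 by (rule real_sqrt_le_mono)
    hence "sqrt c * sqrt (real n) \<le> \<sigma>" by (simp add: real_sqrt_mult)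
    hence "r * (sqrt c * sqrt (real n)) \<le> r * \<sigma>" using A(11) by (intro mult_left_mono) auto
    thus ?thesis unfolding a_def A(12) using sc by (simp add: field_simps)
  qed
  have ge: "g (fst z) (snd z) \<le> ennreal (f z) * indicator Q z" for z
  proof (cases z)
    case (Pair x y)
    show ?thesis
    proof (cases "(x - m1) / \<sigma> \<in> J \<and> (y - \<mu> x) / \<tau> \<le> (m2 - t - \<mu> x) / \<tau>")
      case True
      have "(x - m1) / \<sigma> \<le> a" using True J_def by auto
      hence "x - m1 \<le> \<sigma> * a" using \<sigma>p by (simp add: field_simps)
      hence x: "x \<le> m1 - t" using tle by simp
      have "y \<le> m2 - t" using True \<tau>p by (simp add: divide_right_mono_neg divide_le_cancel)
      hence "z \<in> Q" using x Pair Q_def by auto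
      thus ?thesis using True Pair
        by (simp add: g_def fact ennreal_mult normal_density_nonneg mult.assoc)
    next
      case False
      then show ?thesis using Pair by (auto simp: g_def)
    qed
  qed
  have inner: "(\<integral>\<^sup>+y. g x y \<partial>lborel) \<ge> ennreal K * (ennreal (normal_density m1 \<sigma> x) * indicator J ((x - m1) / \<sigma>))" for x
  proof -
    have "(\<integral>\<^sup>+y. g x y \<partial>lborel) = ennreal (normal_density m1 \<sigma> x) * indicator J ((x - m1) / \<sigma>) *
        (\<integral>\<^sup>+y. ennreal (normal_density (\<mu> x) \<tau> y) * indicator {..(m2 - t - \<mu> x) / \<tau>} ((y - \<mu> x) / \<tau>) \<partial>lborel)"
      unfolding g_def by (rule nn_integral_cmult) measurable
    also have "\<dots> = ennreal (normal_density m1 \<sigma> x) * indicator J ((x - m1) / \<sigma>) * ennreal (Phi ((m2 - t - \<mu> x) / \<tau>))"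
      by (simp add: aff[OF \<tau>p] Phi_emeasure)
    finally have eq: "(\<integral>\<^sup>+y. g x y \<partial>lborel) = ennreal (normal_density m1 \<sigma> x) * indicator J ((x - m1) / \<sigma>) * ennreal (Phi ((m2 - t - \<mu> x) / \<tau>))" .
    show ?thesis
    proof (cases "(x - m1) / \<sigma> \<in> J")
      case True
      have "K \<le> Phi ((m2 - t - \<mu> x) / \<tau>)"
        unfolding K_def
      proof (rule Phi_mono)
        have "2 * (- r / sqrt c) < (x - m1) / sqrt s11" "(x - m1) / sqrt s11 \<le> - r / sqrt c"
          using True unfolding J_def a_def \<sigma>_def by auto
        from core[where ?s12.0=s12 and ?s22.0=s22 and ?m2.0=m2, OF A(2) A(3) Np A(11) A(12) s11p _ _ _ this] dp E2 E3
        show "a * (1 + 2 * \<rho>0) / sqrt (1 - \<rho>0\<^sup>2) \<le> (m2 - t - \<mu> x) / \<tau>"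
          unfolding a_def \<rho>0_def \<mu>_def \<tau>_def d_def by simp
      qed
      hence "ennreal K \<le> ennreal (Phi ((m2 - t - \<mu> x) / \<tau>))" by (simp add: ennreal_leI)
      hence "ennreal K * (ennreal (normal_density m1 \<sigma> x) * indicator J ((x - m1) / \<sigma>))
          \<le> ennreal (Phi ((m2 - t - \<mu> x) / \<tau>)) * (ennreal (normal_density m1 \<sigma> x) * indicator J ((x - m1) / \<sigma>))"
        by (rule mult_right_mono) simp
      thus ?thesis unfolding eq by (simp add: ac_simps)
    next
      case False
      then show ?thesis by simp
    qed
  qed
  have "ennreal (alpha_r r c C) = ennreal K * emeasure Dn J"
  proof -
    have "emeasure Dn J = ennreal (Phi a - Phi (2 * a))"
      unfolding Dn_def J_def using ap by (intro Phi_diff) simp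
    moreover have "alpha_r r c C = (Phi a - Phi (2 * a)) * K"
      unfolding alpha_r_def K_def a_def \<rho>0_def Let_def by simp
    moreover have "Phi a - Phi (2 * a) \<ge> 0" using Phi_mono[of "2 * a" a] ap by simp
    moreover have "K \<ge> 0" unfolding K_def by (rule Phi_nonneg)
    ultimately show ?thesis by (simp add: ennreal_mult mult.commute)
  qed
  also have "emeasure Dn J = (\<integral>\<^sup>+x. ennreal (normal_density m1 \<sigma> x) * indicator J ((x - m1) / \<sigma>) \<partial>lborel)"
    unfolding Dn_def J_def by (rule aff[OF \<sigma>p, symmetric]) simp
  also have "ennreal K * \<dots> = (\<integral>\<^sup>+x. ennreal K * (ennreal (normal_density m1 \<sigma> x) * indicator J ((x - m1) / \<sigma>)) \<partial>lborel)"
    unfolding J_def by (rule nn_integral_cmult[symmetric]) measurable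
  also have "\<dots> \<le> (\<integral>\<^sup>+x. \<integral>\<^sup>+y. g x y \<partial>lborel \<partial>lborel)"
    by (intro nn_integral_mono inner)
  also have "\<dots> = (\<integral>\<^sup>+z. g (fst z) (snd z) \<partial>(lborel \<Otimes>\<^sub>M lborel))"
    using lborel.nn_integral_fst[OF gm] by simp
  also have "\<dots> = (\<integral>\<^sup>+z. g (fst z) (snd z) \<partial>lborel)" by (simp add: lborel_prod)
  also have "\<dots> \<le> (\<integral>\<^sup>+z. ennreal (f z) * indicator Q z \<partial>lborel)"
    by (intro nn_integral_mono ge)
  also have "\<dots> = emeasure B Q"
    unfolding B_def bivariate_normal_def f_def[symmetric] by (rule emeasure_density[symmetric]) auto
  finally have "ennreal (alpha_r r c C) \<le> ennreal (M.prob {\<omega> \<in> space M. Z \<omega> \<in> Q})"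
    using em_eq prob_eq by simp
  moreover have "0 \<le> M.prob {\<omega> \<in> space M. Z \<omega> \<in> Q}" by simp
  ultimately have "alpha_r r c C \<le> M.prob {\<omega> \<in> space M. Z \<omega> \<in> Q}"
    unfolding ennreal_le_iff2 by linarith
  thus ?thesis unfolding Q_def .
qed
end
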